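(* Let $\phi\in\mathrm{Aut}_0(H)$. Then for any $n\in\mathbb{Z}$ and $m\geq1$, $\phi(x^ny^m)=\alpha_{n,m}x^ny^m+h_{n,m}$ for some $\alpha_{n,m}\in k^\times$ and $h_{n,m}\in\sum_{i=0}^{m-1}H(i)$. Moreover, if $\alpha_{n,1}=1$ for all $n\in\mathbb{Z}$, then $\alpha_{n,m}=1$ for all $n\in\mathbb{Z}$ and $m\geq1$.
   Context: Let $k$ be a field and $0\neq q\in k$ not a root of unity. $H=k_q[x,x^{-1},y]$ is the $k$-algebra generated by $x,x^{-1},y$ with $xx^{-1}=x^{-1}x=1$, $yx=qxy$, a Hopf algebra with $\Delta(x)=x\otimes x$, $\Delta(x^{-1})=x^{-1}\otimes x^{-1}$, $\Delta(y)=y\otimes x+1\otimes y$, $\varepsilon(x)=1$, $\varepsilon(y)=0$; $\{x^ny^m:n\in\mathbb{Z},m\in\mathbb{N}\}$ is a $k$-basis. $H_0=\mathrm{span}\{x^n:n\in\mathbb{Z}\}$ and $H(m)=H_0y^m$. $\mathrm{Aut}_0(H)$ is the group of coalgebra automorphisms $\phi$ of $H$ with $\phi(1)=1$. *)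

theory Defs
  imports Main
begin

text \<open>Elements of H = k_q[x,x^-1,y] are represented by their coordinates with respect
  to the basis x^n y^m, i.e. finitely supported functions int \<times> nat \<Rightarrow> k
  (the pair (n,m) stands for x^n y^m).  Elements of H \<otimes> H are finitely supported
  functions on pairs of basis indices.\<close>

type_synonym 'k hel = "int \<times> nat \<Rightarrow> 'k"
type_synonym 'k hten = "(int \<times> nat) \<times> (int \<times> nat) \<Rightarrow> 'k"

definition supp :: "('a \<Rightarrow> 'k::zero) \<Rightarrow> 'a set" where
  "supp f = {a. f a \<noteq> 0}"

definition Hcarrier :: "'k::zero hel set" where
  "Hcarrier = {f. finite (supp f)}"

definition bas :: "int \<Rightarrow> nat \<Rightarrow> 'k::{zero,one} hel" where
  "bas n m = (\<lambda>b. if b = (n, m) then 1 else 0)"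

text \<open>Gaussian (q-)binomial coefficients: (a+b)^m = sum_i qbinom q m i a^i b^(m-i) when b a = q a b\<close>
fun qbinom :: "'k::comm_ring_1 \<Rightarrow> nat \<Rightarrow> nat \<Rightarrow> 'k" where
  "qbinom q 0 0 = 1"
| "qbinom q 0 (Suc i) = 0"
| "qbinom q (Suc m) 0 = 1"
| "qbinom q (Suc m) (Suc i) = qbinom q m i + q ^ (Suc i) * qbinom q m (Suc i)"

text \<open>Comultiplication: Delta(x^n y^m) = sum_i qbinom q m i  x^n y^i \<otimes> x^(n+i) y^(m-i),
  obtained from Delta(x) = x\<otimes>x, Delta(y) = y\<otimes>x + 1\<otimes>y and multiplicativity.\<close>
definition Delta :: "'k::comm_ring_1 \<Rightarrow> 'k hel \<Rightarrow> 'k hten" where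
  "Delta q f = (\<lambda>((n1, i), (n2, j)).
      if n2 = n1 + int i then qbinom q (i + j) i * f (n1, i + j) else 0)"

definition eps :: "'k::comm_ring_1 hel \<Rightarrow> 'k" where
  "eps f = (\<Sum>n\<in>{n. f (n, 0) \<noteq> 0}. f (n, 0))"

text \<open>phi \<otimes> phi applied to a (finitely supported) tensor\<close>
definition tensmap :: "('k::comm_ring_1 hel \<Rightarrow> 'k hel) \<Rightarrow> 'k hten \<Rightarrow> 'k hten" where
  "tensmap \<phi> t = (\<lambda>(c, d). \<Sum>(a, b)\<in>supp t. t (a, b) * \<phi> (bas (fst a) (snd a)) c
                                             * \<phi> (bas (fst b) (snd b)) d)"

definition klinear :: "('k::comm_ring_1 hel \<Rightarrow> 'k hel) \<Rightarrow> bool" where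
  "klinear \<phi> \<longleftrightarrow> (\<forall>f\<in>Hcarrier. \<forall>g\<in>Hcarrier. \<phi> (\<lambda>b. f b + g b) = (\<lambda>b. \<phi> f b + \<phi> g b))
     \<and> (\<forall>c. \<forall>f\<in>Hcarrier. \<phi> (\<lambda>b. c * f b) = (\<lambda>b. c * \<phi> f b))"

definition Aut0 :: "'k::field \<Rightarrow> ('k hel \<Rightarrow> 'k hel) set" where
  "Aut0 q = {\<phi>. klinear \<phi> \<and> bij_betw \<phi> Hcarrier Hcarrier
      \<and> (\<forall>f\<in>Hcarrier. Delta q (\<phi> f) = tensmap \<phi> (Delta q f))
      \<and> (\<forall>f\<in>Hcarrier. eps (\<phi> f) = eps f)
      \<and> \<phi> (bas 0 0) = bas 0 0}"

text \<open>sum_{i=0}^{m-1} H(i), where H(i) = H_0 y^i\<close>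
definition lowdeg :: "nat \<Rightarrow> 'k::zero hel set" where
  "lowdeg m = {h \<in> Hcarrier. \<forall>n i. h (n, i) \<noteq> 0 \<longrightarrow> i < m}"

end

theory Submission
  imports Defs
begin

lemma bas_apply: "bas s m (x, i) = (if x = s \<and> i = m then 1 else 0)"
  by (simp add: bas_def)

lemma bas_H: "bas n m \<in> Hcarrier"
proof -
  have "supp (bas n m :: 'k::{zero,one} hel) \<subseteq> {(n,m)}" by (auto simp: supp_def bas_def)
  then show ?thesis unfolding Hcarrier_def by (auto intro: finite_subset)
qed

lemma H_add: "f \<in> Hcarrier \<Longrightarrow> g \<in> Hcarrier \<Longrightarrow> (\<lambda>b. f b + g b :: 'k::monoid_add) \<in> Hcarrier"
proof -
  assume a: "f \<in> Hcarrier" "g \<in> Hcarrier"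
  have "supp (\<lambda>b. f b + g b) \<subseteq> supp f \<union> supp g" by (auto simp: supp_def)
  then show ?thesis using a unfolding Hcarrier_def by (auto intro: finite_subset)
qed

lemma H_smult: "f \<in> Hcarrier \<Longrightarrow> (\<lambda>b. c * f b :: 'k::mult_zero) \<in> Hcarrier"
proof -
  assume a: "f \<in> Hcarrier"
  have "supp (\<lambda>b. c * f b) \<subseteq> supp f" by (auto simp: supp_def)
  then show ?thesis using a unfolding Hcarrier_def by (auto intro: finite_subset)
qed

lemma qbinom_gt: "i > m \<Longrightarrow> qbinom q m i = 0"
proof (induction m arbitrary: i)
  case 0 then show ?case by (cases i) auto
next
  case (Suc m) then show ?case by (cases i) auto
qed

lemma qbinom_0: "qbinom q m 0 = 1" by (cases m) auto

lemma qbinom_diag: "qbinom q m m = 1"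
  by (induction m) (auto simp: qbinom_gt)

lemma qbinom_1: "(1 - q) * qbinom q m 1 = 1 - q ^ m"
proof (induction m)
  case 0 then show ?case by simp
next
  case (Suc m)
  have "(1 - q) * qbinom q (Suc m) 1 = (1 - q) * (1 + q * qbinom q m 1)"
    by (simp add: qbinom_0)
  also have "\<dots> = (1 - q) + q * ((1 - q) * qbinom q m 1)" by (simp add: algebra_simps)
  also have "\<dots> = 1 - q ^ Suc m" unfolding Suc.IH by (simp add: algebra_simps)
  finally show ?case .
qed

lemma qbinom_1_nz: "q ^ m \<noteq> 1 \<Longrightarrow> qbinom (q::'k::field) m 1 \<noteq> 0"
  using qbinom_1[of q m] by auto

lemma supp_Delta_bas: "supp (Delta q (bas n m)) \<subseteq> (\<lambda>i. ((n,i),(n + int i, m - i))) ` {..m}"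
proof
  fix x assume xs: "x \<in> supp (Delta q (bas n m))"
  obtain n1 i n2 j where x: "x = ((n1,i),(n2,j))" using prod.exhaust by metis
  from xs x have nz: "Delta q (bas n m) ((n1,i),(n2,j)) \<noteq> 0" by (simp add: supp_def)
  from nz have "n2 = n1 + int i" "n1 = n" "i + j = m" by (auto simp: Delta_def bas_def split: if_splits)
  then show "x \<in> (\<lambda>i. ((n,i),(n + int i, m - i))) ` {..m}" using x by (auto intro!: image_eqI[where x=i])
qed

lemma tensmap_Delta_bas:
  "tensmap \<phi> (Delta q (bas n m)) (c,d) = (\<Sum>k\<le>m. qbinom q m k * \<phi> (bas n k) c * \<phi> (bas (n + int k) (m-k)) d)"
proof -
  let ?t = "Delta q (bas n m)"
  let ?T = "(\<lambda>i. ((n,i),(n + int i, m - i))) ` {..m}"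
  let ?g = "\<lambda>(a,b). ?t (a,b) * \<phi> (bas (fst a) (snd a)) c * \<phi> (bas (fst b) (snd b)) d"
  have "tensmap \<phi> ?t (c,d) = sum ?g (supp ?t)" by (simp add: tensmap_def)
  also have "\<dots> = sum ?g ?T"
    apply (rule sum.mono_neutral_left)
      apply simp
     apply (rule supp_Delta_bas)
    by (auto simp: supp_def)
  also have "\<dots> = (\<Sum>i\<le>m. ?g ((n,i),(n + int i, m - i)))"
    by (subst sum.reindex) (auto simp: inj_on_def)
  also have "\<dots> = (\<Sum>k\<le>m. qbinom q m k * \<phi> (bas n k) c * \<phi> (bas (n + int k) (m-k)) d)"
    by (rule sum.cong) (auto simp: Delta_def bas_def)
  finally show ?thesis .
qed

lemma sum_single: "finite A \<Longrightarrow> x \<in> A \<Longrightarrow> (\<And>y. y \<in> A \<Longrightarrow> y \<noteq> x \<Longrightarrow> g y = 0) \<Longrightarrow> sum g A = g x"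
  by (subst sum.remove[of A x]) (auto intro: sum.neutral)

definition sig :: "('k::{zero,one} hel \<Rightarrow> 'k hel) \<Rightarrow> int \<Rightarrow> int" where
  "sig \<phi> n = (SOME s. \<phi> (bas n 0) = bas s 0)"

lemma bas_inj: "bas s 0 = (bas t 0 :: 'k::field hel) \<Longrightarrow> s = t"
  by (drule fun_cong[where x="(s,0)"]) (simp add: bas_def split: if_splits)

context
  fixes q :: "'k::field" and \<phi> :: "'k hel \<Rightarrow> 'k hel"
  assumes qr: "\<forall>r::nat. r > 0 \<longrightarrow> q ^ r \<noteq> 1"
    and A: "\<phi> \<in> Aut0 q"
begin

lemma lin: "klinear \<phi>" using A by (simp add: Aut0_def)
lemma bij: "bij_betw \<phi> Hcarrier Hcarrier" using A by (simp add: Aut0_def)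
lemma comm: "f \<in> Hcarrier \<Longrightarrow> Delta q (\<phi> f) = tensmap \<phi> (Delta q f)" using A by (simp add: Aut0_def)
lemma epsc: "f \<in> Hcarrier \<Longrightarrow> eps (\<phi> f) = eps f" using A by (simp add: Aut0_def)
lemma one: "\<phi> (bas 0 0) = bas 0 0" using A by (simp add: Aut0_def)

lemma MI: "Delta q (\<phi> (bas n m)) (c,d) = (\<Sum>k\<le>m. qbinom q m k * \<phi> (bas n k) c * \<phi> (bas (n + int k) (m-k)) d)"
  using comm[OF bas_H] tensmap_Delta_bas by simp

lemma MIa: "n2 = n1 + int i \<Longrightarrow> qbinom q (i+j) i * \<phi> (bas n m) (n1, i+j)
   = (\<Sum>k\<le>m. qbinom q m k * \<phi> (bas n k) (n1,i) * \<phi> (bas (n + int k) (m-k)) (n2,j))"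
  using MI[of n m "(n1,i)" "(n2,j)"] by (simp add: Delta_def)

lemma MIb: "n2 \<noteq> n1 + int i \<Longrightarrow> 0
   = (\<Sum>k\<le>m. qbinom q m k * \<phi> (bas n k) (n1,i) * \<phi> (bas (n + int k) (m-k)) (n2,j))"
  using MI[of n m "(n1,i)" "(n2,j)"] by (simp add: Delta_def)

lemma grouplike: "\<exists>s. \<phi> (bas n 0) = bas s 0"
proof -
  define g where "g = \<phi> (bas n 0)"
  have G: "(if n2 = n1 + int i then qbinom q (i+j) i * g (n1,i+j) else 0) = g (n1,i) * g (n2,j)" for n1 n2 i j
    using MI[of n 0 "(n1,i)" "(n2,j)"] by (simp add: g_def Delta_def split: if_splits)
  have "eps g = eps (bas n 0 :: 'k hel)" unfolding g_def by (rule epsc[OF bas_H])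
  also have "{n'. bas n 0 (n',0) \<noteq> (0::'k)} = {n}" by (auto simp: bas_def)
  hence "eps (bas n 0 :: 'k hel) = 1" by (simp add: eps_def bas_apply)
  finally have e: "eps g = 1" .
  obtain s where s: "g (s,0) \<noteq> 0"
  proof (rule ccontr)
    assume "\<not> thesis"
    hence "\<forall>x. g (x,0) = 0" using that by blast
    hence "eps g = 0" by (simp add: eps_def)
    with e show False by simp
  qed
  have s1: "g (s,0) = 1" using G[of s s 0 0] s by (simp add: qbinom_0)
  have o: "g (x,0) = 0" if "x \<noteq> s" for x
    using G[of x s 0 0] that s by simp
  have k: "g (x,k) = 0" if "k \<ge> 1" for x k
  proof (rule ccontr)
    assume nz: "g (x,k) \<noteq> 0"
    have "g (x,0) = 1" using G[of x x 0 k] nz by (simp add: qbinom_0)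
    hence xs: "x = s" using o by fastforce
    have "g (x + int k, 0) = 1" using G[of "x + int k" x k 0] nz by (simp add: qbinom_diag)
    hence "x + int k = s" using o by fastforce
    with xs that show False by simp
  qed
  have "g = bas s 0"
  proof
    fix b :: "int \<times> nat"
    obtain x i where b: "b = (x,i)" by fastforce
    show "g b = bas s 0 b"
      using b s1 o k[of i x] by (cases "i = 0") (auto simp: bas_def)
  qed
  then show ?thesis unfolding g_def by blast
qed

lemma phi0: "\<phi> (bas n 0) = bas (sig \<phi> n) 0"
  unfolding sig_def using someI_ex[OF grouplike[of n]] .

lemma deg: "\<phi> (bas n m) (n1, D) \<noteq> 0 \<Longrightarrow> D \<le> m"
proof (induction m arbitrary: n n1 D rule: less_induct)
  case (less m)
  show ?case
  proof (rule ccontr)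
    assume "\<not> D \<le> m"
    hence Dm: "D > m" by simp
    show False
    proof (cases "m = 0")
      case True
      with less.prems show False using Dm by (simp add: phi0 bas_apply)
    next
      case False
      have D1: "1 + (D - 1) = D" using Dm by simp
      have "qbinom q (1 + (D-1)) 1 * \<phi> (bas n m) (n1, 1 + (D-1))
          = (\<Sum>k\<le>m. qbinom q m k * \<phi> (bas n k) (n1,1) * \<phi> (bas (n + int k) (m-k)) (n1 + int 1, D - 1))"
        by (rule MIa) simp
      also have "\<dots> = 0"
      proof (rule sum.neutral, rule ballI)
        fix k assume "k \<in> {..m}"
        show "qbinom q m k * \<phi> (bas n k) (n1,1) * \<phi> (bas (n + int k) (m-k)) (n1 + int 1, D - 1) = 0"
        proof (cases "k = 0")
          case True then show ?thesis by (simp add: phi0 bas_apply)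
        next
          case False
          have "m - k < m" using False \<open>m \<noteq> 0\<close> by simp
          have "\<phi> (bas (n + int k) (m-k)) (n1 + int 1, D - 1) = 0"
          proof (rule ccontr)
            assume "\<phi> (bas (n + int k) (m-k)) (n1 + int 1, D - 1) \<noteq> 0"
            from less.IH[OF \<open>m - k < m\<close> this] Dm False \<open>m \<noteq> 0\<close> show False by simp
          qed
          then show ?thesis by simp
        qed
      qed
      finally have "qbinom q D 1 * \<phi> (bas n m) (n1, D) = 0" using D1 by simp
      moreover have "qbinom q D 1 \<noteq> 0" using qr Dm by (intro qbinom_1_nz) auto
      ultimately show False using less.prems by simp
    qed
  qed
qed

lemma top: "1 \<le> m \<Longrightarrow> \<phi> (bas n m) (n1, m) \<noteq> 0 \<Longrightarrow> n1 = sig \<phi> n \<and> sig \<phi> (n + int m) = n1 + int m"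
proof -
  assume m1: "1 \<le> m" and nz: "\<phi> (bas n m) (n1, m) \<noteq> 0"
  have "qbinom q (0+m) 0 * \<phi> (bas n m) (n1, 0+m)
      = (\<Sum>k\<le>m. qbinom q m k * \<phi> (bas n k) (n1,0) * \<phi> (bas (n + int k) (m-k)) (n1, m))"
    by (rule MIa) simp
  also have "\<dots> = qbinom q m 0 * \<phi> (bas n 0) (n1,0) * \<phi> (bas (n + int 0) (m-0)) (n1, m)"
  proof (rule sum_single)
    fix k assume "k \<in> {..m}" "k \<noteq> 0"
    hence "\<not> m \<le> m - k" using m1 by auto
    hence "\<phi> (bas (n + int k) (m-k)) (n1, m) = 0" using deg by blast
    then show "qbinom q m k * \<phi> (bas n k) (n1,0) * \<phi> (bas (n + int k) (m-k)) (n1, m) = 0" by simp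
  qed auto
  finally have "\<phi> (bas n m) (n1, m) = bas (sig \<phi> n) 0 (n1,0) * \<phi> (bas n m) (n1, m)"
    by (simp add: qbinom_0 phi0)
  with nz have p1: "n1 = sig \<phi> n" by (auto simp: bas_def split: if_splits)
  have "qbinom q (m+0) m * \<phi> (bas n m) (n1, m+0)
      = (\<Sum>k\<le>m. qbinom q m k * \<phi> (bas n k) (n1,m) * \<phi> (bas (n + int k) (m-k)) (n1 + int m, 0))"
    by (rule MIa) simp
  also have "\<dots> = qbinom q m m * \<phi> (bas n m) (n1,m) * \<phi> (bas (n + int m) (m-m)) (n1 + int m, 0)"
  proof (rule sum_single)
    fix k assume "k \<in> {..m}" "k \<noteq> m"
    hence "\<not> m \<le> k" by auto
    hence "\<phi> (bas n k) (n1, m) = 0" using deg by blast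
    then show "qbinom q m k * \<phi> (bas n k) (n1,m) * \<phi> (bas (n + int k) (m-k)) (n1 + int m, 0) = 0" by simp
  qed auto
  finally have "\<phi> (bas n m) (n1, m) = \<phi> (bas n m) (n1, m) * bas (sig \<phi> (n + int m)) 0 (n1 + int m,0)"
    by (simp add: qbinom_diag phi0)
  with nz have "sig \<phi> (n + int m) = n1 + int m" by (auto simp: bas_def split: if_splits)
  with p1 show ?thesis by simp
qed


lemma sum_atMost_1: "(\<Sum>k\<le>(1::nat). g k) = g 0 + (g 1 :: 'a::comm_monoid_add)"
  by (simp add: atMost_Suc add.commute)

lemma m1: "\<exists>n1. \<phi> (bas n 1) (n1, 1) \<noteq> 0"
proof (rule ccontr)
  assume "\<not> ?thesis"
  hence Z1: "\<phi> (bas n 1) (x, 1) = 0" for x by blast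
  define f where "f = \<phi> (bas n 1)"
  have Z: "f (x, D) = 0" if "D \<ge> 1" for x D
  proof (cases "D = 1")
    case True then show ?thesis using Z1 f_def by simp
  next
    case False
    hence "\<not> D \<le> 1" using that by simp
    then show ?thesis using deg unfolding f_def by blast
  qed
  define s where "s = sig \<phi> n"
  define t where "t = sig \<phi> (n + 1)"
  have st: "s \<noteq> t"
  proof
    assume "s = t"
    hence "\<phi> (bas n 0) = \<phi> (bas (n+1) 0)" by (simp add: phi0 s_def t_def)
    hence "bas n 0 = (bas (n+1) 0 :: 'k hel)"
      using bij bas_H unfolding bij_betw_def inj_on_def by blast
    hence "n = n + 1" by (rule bas_inj)
    then show False by simp
  qed
  have diag: "f (x,0) = (if x = s then 1 else 0) * f (x,0) + f (x,0) * (if x = t then 1 else 0)" for x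
  proof -
    have "qbinom q (0+0) 0 * \<phi> (bas n 1) (x, 0+0)
      = (\<Sum>k\<le>1. qbinom q 1 k * \<phi> (bas n k) (x,0) * \<phi> (bas (n + int k) (1-k)) (x,0))"
      by (rule MIa) simp
    then show ?thesis
      by (simp add: sum_atMost_1 phi0 bas_apply qbinom_diag qbinom_0 f_def s_def t_def)
  qed
  have out: "f (x,0) = 0" if "x \<noteq> s" "x \<noteq> t" for x
    using diag[of x] that by simp
  have offd: "0 = (\<Sum>k\<le>1. qbinom q 1 k * \<phi> (bas n k) (s,0) * \<phi> (bas (n + int k) (1-k)) (t,0))"
    by (rule MIb) (use st in simp)
  hence ts: "f (t,0) = - f (s,0)"
    using st by (simp add: sum_atMost_1 phi0 bas_apply qbinom_diag qbinom_0 f_def s_def t_def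
        eq_neg_iff_add_eq_0 add.commute)
  define \<beta> where "\<beta> = f (s,0)"
  have fe: "f = (\<lambda>b. \<beta> * bas s 0 b + (- \<beta>) * bas t 0 b)"
  proof
    fix b :: "int \<times> nat"
    obtain x i where b: "b = (x,i)" by fastforce
    show "f b = \<beta> * bas s 0 b + (- \<beta>) * bas t 0 b"
    proof (cases "i = 0")
      case False then show ?thesis using Z[of i x] b by (simp add: bas_apply)
    next
      case True then show ?thesis using b out[of x] ts st by (auto simp: bas_apply \<beta>_def)
    qed
  qed
  define g where "g = (\<lambda>b. \<beta> * bas n 0 b + (- \<beta>) * bas (n+1) 0 b :: 'k)"
  have X: "(\<lambda>b. \<beta> * bas n 0 b) \<in> Hcarrier" "(\<lambda>b. (-\<beta>) * bas (n+1) 0 b) \<in> Hcarrier"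
    by (rule H_smult[OF bas_H])+
  have gH: "g \<in> Hcarrier" unfolding g_def by (rule H_add[OF X])
  have "\<phi> g = (\<lambda>b. \<phi> (\<lambda>b. \<beta> * bas n 0 b) b + \<phi> (\<lambda>b. (-\<beta>) * bas (n+1) 0 b) b)"
  proof -
    have add: "\<forall>f\<in>Hcarrier. \<forall>g\<in>Hcarrier. \<phi> (\<lambda>b. f b + g b) = (\<lambda>b. \<phi> f b + \<phi> g b)"
      using lin unfolding klinear_def by blast
    show ?thesis unfolding g_def by (rule add[rule_format, OF X])
  qed
  also have "\<dots> = (\<lambda>b. \<beta> * \<phi> (bas n 0) b + (-\<beta>) * \<phi> (bas (n+1) 0) b)"
  proof -
    have "\<phi> (\<lambda>b. \<beta> * bas n 0 b) = (\<lambda>b. \<beta> * \<phi> (bas n 0) b)"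
         "\<phi> (\<lambda>b. (-\<beta>) * bas (n+1) 0 b) = (\<lambda>b. (-\<beta>) * \<phi> (bas (n+1) 0) b)"
      using lin bas_H unfolding klinear_def by blast+
    then show ?thesis by simp
  qed
  also have "\<dots> = f" by (simp add: fe phi0 s_def t_def)
  finally have "\<phi> g = \<phi> (bas n 1)" by (simp add: f_def)
  hence "g = bas n 1" using bij gH bas_H unfolding bij_betw_def inj_on_def by blast
  hence "g (n,1) = bas n 1 (n,1)" by simp
  then show False by (simp add: g_def bas_apply)
qed

lemma sig_step: "sig \<phi> (n + 1) = sig \<phi> n + 1"
proof -
  obtain n1 where "\<phi> (bas n 1) (n1, 1) \<noteq> 0" using m1 by blast
  from top[OF _ this] show ?thesis by simp
qed

lemma sig_id: "sig \<phi> n = n"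
proof -
  have "bas (sig \<phi> 0) 0 = (bas 0 0 :: 'k hel)" using one phi0[of 0] by simp
  hence z: "sig \<phi> 0 = 0" by (rule bas_inj)
  show ?thesis
  proof (induction n rule: int_induct[where k=0])
    case base then show ?case by (rule z)
  next
    case (step1 i) then show ?case using sig_step[of i] by simp
  next
    case (step2 i) then show ?case using sig_step[of "i - 1"] by simp
  qed
qed

lemma top': "1 \<le> m \<Longrightarrow> \<phi> (bas n m) (n1, m) \<noteq> 0 \<Longrightarrow> n1 = n"
  using top sig_id by blast

lemma a1: "\<phi> (bas n 1) (n, 1) \<noteq> 0"
  using m1[of n] top'[of 1 n] by auto

lemma mult: "1 \<le> m \<Longrightarrow> \<phi> (bas n (Suc m)) (n, Suc m) = \<phi> (bas n 1) (n,1) * \<phi> (bas (n+1) m) (n+1, m)"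
proof -
  assume m1: "1 \<le> m"
  have "qbinom q (1+m) 1 * \<phi> (bas n (Suc m)) (n, 1+m)
      = (\<Sum>k\<le>Suc m. qbinom q (Suc m) k * \<phi> (bas n k) (n,1) * \<phi> (bas (n + int k) (Suc m-k)) (n + int 1, m))"
    by (rule MIa) simp
  also have "\<dots> = qbinom q (Suc m) 1 * \<phi> (bas n 1) (n,1) * \<phi> (bas (n + int 1) (Suc m-1)) (n + int 1, m)"
  proof (rule sum_single)
    fix k assume k: "k \<in> {..Suc m}" "k \<noteq> 1"
    show "qbinom q (Suc m) k * \<phi> (bas n k) (n,1) * \<phi> (bas (n + int k) (Suc m-k)) (n + int 1, m) = 0"
    proof (cases "k = 0")
      case True then show ?thesis by (simp add: phi0 sig_id bas_apply)
    next
      case False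
      with k have "\<not> m \<le> Suc m - k" by auto
      hence "\<phi> (bas (n + int k) (Suc m-k)) (n + int 1, m) = 0" using deg by blast
      then show ?thesis by simp
    qed
  qed (use m1 in auto)
  finally have "qbinom q (Suc m) 1 * \<phi> (bas n (Suc m)) (n, Suc m)
      = qbinom q (Suc m) 1 * (\<phi> (bas n 1) (n,1) * \<phi> (bas (n+1) m) (n+1, m))" by simp
  moreover have "qbinom q (Suc m) 1 \<noteq> 0" using qr by (intro qbinom_1_nz) auto
  ultimately show ?thesis by simp
qed

lemma anz: "1 \<le> m \<Longrightarrow> \<phi> (bas n m) (n, m) \<noteq> 0"
proof (induction m arbitrary: n)
  case 0 then show ?case by simp
next
  case (Suc m)
  show ?case
  proof (cases "m = 0")
    case True then show ?thesis using a1 by simp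
  next
    case False
    hence "1 \<le> m" by simp
    then show ?thesis using mult[of m n] a1[of n] Suc.IH[of "n+1"] by simp
  qed
qed

lemma aone: "(\<forall>n. \<phi> (bas n 1) (n, 1) = 1) \<Longrightarrow> 1 \<le> m \<Longrightarrow> \<phi> (bas n m) (n, m) = 1"
proof (induction m arbitrary: n)
  case 0 then show ?case by simp
next
  case (Suc m)
  show ?case
  proof (cases "m = 0")
    case True then show ?thesis using Suc.prems by simp
  next
    case False
    hence "1 \<le> m" by simp
    then show ?thesis using mult[of m n] Suc.prems Suc.IH[of "n+1"] by simp
  qed
qed

lemma decomp: "1 \<le> m \<Longrightarrow>
  (\<lambda>b. \<phi> (bas n m) b - \<phi> (bas n m) (n, m) * bas n m b) \<in> lowdeg m \<and>
  \<phi> (bas n m) = (\<lambda>b. \<phi> (bas n m) (n, m) * bas n m b + (\<phi> (bas n m) b - \<phi> (bas n m) (n, m) * bas n m b))"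
proof -
  assume m1: "1 \<le> m"
  let ?f = "\<phi> (bas n m)"
  let ?h = "\<lambda>b. ?f b - ?f (n, m) * bas n m b"
  have fH: "?f \<in> Hcarrier" using bij bas_H unfolding bij_betw_def by blast
  have "?h = (\<lambda>b. ?f b + (- ?f (n,m)) * bas n m b)" by simp
  moreover have "(\<lambda>b. ?f b + (- ?f (n,m)) * bas n m b) \<in> Hcarrier"
    by (rule H_add[OF fH H_smult[OF bas_H]])
  ultimately have hH: "?h \<in> Hcarrier" by simp
  have "\<forall>x i. ?h (x, i) \<noteq> 0 \<longrightarrow> i < m"
  proof (intro allI impI)
    fix x i assume nz: "?h (x, i) \<noteq> 0"
    show "i < m"
    proof (rule ccontr)
      assume "\<not> i < m"
      show False
      proof (cases "i = m")
        case True
        show False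
        proof (cases "x = n")
          case True with \<open>i = m\<close> nz show False by (simp add: bas_apply)
        next
          case False
          with \<open>i = m\<close> nz have "?f (x, m) \<noteq> 0" by (simp add: bas_apply)
          with top'[OF m1] False show False by blast
        qed
      next
        case False
        with \<open>\<not> i < m\<close> have "\<not> i \<le> m" by simp
        hence "?f (x, i) = 0" using deg by blast
        with nz \<open>\<not> i \<le> m\<close> show False by (simp add: bas_apply)
      qed
    qed
  qed
  with hH show ?thesis by (simp add: lowdeg_def)
qed

end

theorem lemma2p9:
  fixes q :: "'k::field" and \<phi> :: "'k hel \<Rightarrow> 'k hel"
  assumes "q \<noteq> 0" and "\<forall>r::nat. r > 0 \<longrightarrow> q ^ r \<noteq> 1"
    and "\<phi> \<in> Aut0 q"
  shows "(\<forall>n m. m \<ge> 1 \<longrightarrow> (\<exists>\<alpha> h. \<alpha> \<noteq> 0 \<and> h \<in> lowdeg m \<and>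
            \<phi> (bas n m) = (\<lambda>b. \<alpha> * bas n m b + h b)))
       \<and> ((\<forall>n. \<exists>h. h \<in> lowdeg 1 \<and> \<phi> (bas n 1) = (\<lambda>b. bas n 1 b + h b))
            \<longrightarrow> (\<forall>n m. m \<ge> 1 \<longrightarrow> (\<exists>h. h \<in> lowdeg m \<and> \<phi> (bas n m) = (\<lambda>b. bas n m b + h b))))"
proof (intro conjI allI impI)
  fix n and m :: nat assume m1: "m \<ge> 1"
  show "\<exists>\<alpha> h. \<alpha> \<noteq> 0 \<and> h \<in> lowdeg m \<and> \<phi> (bas n m) = (\<lambda>b. \<alpha> * bas n m b + h b)"
    using decomp[OF assms(2,3) m1, of n] anz[OF assms(2,3) m1, of n] by blast
next
  fix n and m :: nat
  assume H: "\<forall>n. \<exists>h. h \<in> lowdeg 1 \<and> \<phi> (bas n 1) = (\<lambda>b. bas n 1 b + h b)" and m1: "m \<ge> 1"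
  have "\<phi> (bas n 1) (n, 1) = 1" for n
  proof -
    obtain h where h: "h \<in> lowdeg 1" "\<phi> (bas n 1) = (\<lambda>b. bas n 1 b + h b)" using H by blast
    have "h (n, 1) = 0" using h(1) by (force simp: lowdeg_def)
    then show ?thesis using h(2) by (simp add: bas_apply)
  qed
  hence a: "\<phi> (bas n m) (n, m) = 1" using aone[OF assms(2,3) _ m1] by blast
  show "\<exists>h. h \<in> lowdeg m \<and> \<phi> (bas n m) = (\<lambda>b. bas n m b + h b)"
    using decomp[OF assms(2,3) m1, of n] a by auto
qed

end
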